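(* For all $\Gamma\subseteq Form$ and $\varphi\in Form$: $\Gamma\vdash_{\mathbf K^p}\varphi$ implies $\Gamma\models_{\mathcal C_{P-}}\varphi$; $\Gamma\vdash_{\mathbf T^p}\varphi$ implies $\Gamma\models_{\mathcal C_{re}}\varphi$; and for each $\clubsuit\in\{\mathbf B^p,\mathbf V,\mathbf{KB4}^p,\mathbf I,\mathbf O,\mathbf C\}$, $\Gamma\vdash_\clubsuit\varphi$ implies $\Gamma\models_{\mathcal C_\clubsuit}\varphi$.
   Context: Fix a countable set $P0$ of propositional variables; $Form$: $\varphi::=p\mid\bot\mid(\varphi\wedge\varphi)\mid(\varphi\to\varphi)$ ($\wedge$ left-associative, binds tighter than $\to$). A model is $\mathfrak M=(W,R,V)$ with $W\neq\emptyset$, $R\subseteq W\times W$, $V:P0\to\wp(W)$; pointed model $(\mathfrak M,s)$, $s\in W$. Satisfaction: $\bot$ never true; $p$ true at $s$ iff $s\in V(p)$; $\wedge$ pointwise; $\mathfrak M,s\models\varphi\to\psi$ iff for all $t$ with $sRt$, $\mathfrak M,t\models\varphi$ implies $\mathfrak M,t\models\psi$. For $X\subseteq W$: $-X=W\setminus X$, $R[X]=\{t:\exists s\in X,\ sRt\}$, $R^\Box(X)=\{s:\forall t\,(sRt\Rightarrow t\in X)\}$. A proposition of $(W,R)$ is $X\subseteq W$ with $R[X]\cap R^\Box(R[X])\subseteq X$; an interpretation is a model with every $V(p)$ a proposition. Classes of models: $\mathcal D_{\mathbf K^p}$ all interpretations; $\mathcal D_{\mathbf T^p}$ reflexive interpretations;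 $\mathcal D_{\mathbf B^p}$ symmetric; $\mathcal D_{\mathbf V}$ transitive; $\mathcal D_{\mathbf{KB4}^p}$ symmetric and transitive; $\mathcal D_{\mathbf I}$ reflexive and transitive; $\mathcal D_{\mathbf O}$ reflexive and symmetric; $\mathcal D_{\mathbf C}$ reflexive, symmetric and transitive interpretations; $\mathcal D_{P-}$ the models with $V(p)\subseteq R^\Box(-R^\Box(\emptyset)\cup V(p))$ for all $p$; $\mathcal D_{re}$ all reflexive models. $\mathcal C_\clubsuit=\{(\mathfrak M,s):\mathfrak M\in\mathcal D_\clubsuit,\ s\in\mathfrak M\}$. $\Gamma\models_{\mathcal C}\varphi$ iff for every $(\mathfrak M,s)\in\mathcal C$, if $\mathfrak M,s$ satisfies all of $\Gamma$ then $\mathfrak M,s\models\varphi$. Sequents are pairs $(\Gamma,\varphi)$, $\Gamma\subseteq Form$ arbitrary; $Sqt$ the set of them. For $\vdash\subseteq Sqt$, $\Gamma\vdash\varphi$ means $(\Gamma,\varphi)\in\vdash$, $\psi\vdash\varphi$ means $\{\psi\}\vdash\varphi$, $\vdash\varphi$ means $\emptyset\vdash\varphi$. Rules (for all $\Gamma,\Delta\subseteq Form$, $p\in P0$, formulas): (A) $\Gamma\cup\{\varphi\}\vdash\varphi$; (Mon) $\Gamma\subseteq\Delta$, $\Gamma\vdash\varphi\Rightarrow\Delta\vdash\varphi$; (Cut) $\Gamma\cup\{\psi\}\vdash\varphi$, $\Delta\vdash\psi\Rightarrow\Gamma\cup\Delta\vdash\varphi$; ($\bot$) $\bot\vdash\varphi$;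 ($\wedge$I) $\{\varphi,\psi\}\vdash\varphi\wedge\psi$; ($\wedge$E) $\varphi\wedge\psi\vdash\varphi$, $\varphi\wedge\psi\vdash\psi$; ($\to$0) $\vdash\varphi\to\varphi$; ($\to$1) $\Gamma\vdash\varphi\Rightarrow\{\psi\to\chi:\chi\in\Gamma\}\vdash\psi\to\varphi$; ($\to$2) $\{\varphi\to\psi,\psi\to\chi\}\vdash\varphi\to\chi$; (Refl) $\{\varphi,\varphi\to\psi\}\vdash\psi$; (Tran) $\varphi\to\psi\vdash(\bot\to\bot)\to(\varphi\to\psi)$; (Sym1) $\Gamma\cup\{\psi\}\vdash\chi$ and $\Gamma\cup\{(\varphi\to\psi)\to\bot\}\vdash\chi\Rightarrow\Gamma\cup\{\varphi\}\vdash\chi$; (Sym2) $\{\alpha\wedge\psi\to\chi,\alpha\wedge((\varphi\to\psi)\to\bot)\to\chi\}\vdash\alpha\wedge\varphi\to\chi$; (Prop$^-$) $p\vdash((\bot\to\bot)\to\bot)\to p$; (Prop$_{tr}$) $p\vdash(\bot\to\bot)\to p$; (Prop$_{sy}$) $p\vdash((p\to\bot)\to\bot)\to p$. Let BASE = (A),(Mon),(Cut),($\bot$),($\wedge$I),($\wedge$E),($\to$0),($\to$1),($\to$2). Each $\vdash_\clubsuit$ is the smallest relation $\subseteq Sqt$ satisfying BASE plus: $\mathbf K^p$: (Prop$^-$); $\mathbf T^p$: (Refl),(Prop$^-$); $\mathbf B^p$: (Sym1),(Sym2),(Prop$_{sy}$); $\mathbf V$: (Tran),(Prop$_{tr}$);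 $\mathbf{KB4}^p$: (Tran),(Sym1),(Sym2),(Prop$_{tr}$); $\mathbf I$: (Refl),(Tran),(Prop$_{tr}$); $\mathbf O$: (Refl),(Sym1),(Sym2),(Prop$_{sy}$); $\mathbf C$: (Refl),(Tran),(Sym1),(Sym2),(Prop$_{tr}$). *)

theory Defs
  imports Main
begin

datatype form = Var nat | Bot | Conj form form | Imp form form

datatype logic = Kp | Tp | Bp | Vl | KB4p | Il | Ol | Cl

definition Top :: form where "Top = Imp Bot Bot"

fun has_refl :: "logic \<Rightarrow> bool" where
  "has_refl L = (L \<in> {Tp, Il, Ol, Cl})"
fun has_tran :: "logic \<Rightarrow> bool" where
  "has_tran L = (L \<in> {Vl, KB4p, Il, Cl})"
fun has_sym :: "logic \<Rightarrow> bool" where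
  "has_sym L = (L \<in> {Bp, KB4p, Ol, Cl})"
fun has_prop_minus :: "logic \<Rightarrow> bool" where
  "has_prop_minus L = (L \<in> {Kp, Tp})"
fun has_prop_tr :: "logic \<Rightarrow> bool" where
  "has_prop_tr L = (L \<in> {Vl, KB4p, Il, Cl})"
fun has_prop_sy :: "logic \<Rightarrow> bool" where
  "has_prop_sy L = (L \<in> {Bp, Ol})"

inductive deriv :: "logic \<Rightarrow> form set \<Rightarrow> form \<Rightarrow> bool" for L where
  A: "deriv L (\<Gamma> \<union> {\<phi>}) \<phi>"
| Mon: "\<Gamma> \<subseteq> \<Delta> \<Longrightarrow> deriv L \<Gamma> \<phi> \<Longrightarrow> deriv L \<Delta> \<phi>"
| Cut: "deriv L (\<Gamma> \<union> {\<psi>}) \<phi> \<Longrightarrow> deriv L \<Delta> \<psi> \<Longrightarrow> deriv L (\<Gamma> \<union> \<Delta>) \<phi>"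
| BotE: "deriv L {Bot} \<phi>"
| ConjI: "deriv L {\<phi>, \<psi>} (Conj \<phi> \<psi>)"
| ConjE1: "deriv L {Conj \<phi> \<psi>} \<phi>"
| ConjE2: "deriv L {Conj \<phi> \<psi>} \<psi>"
| Imp0: "deriv L {} (Imp \<phi> \<phi>)"
| Imp1: "deriv L \<Gamma> \<phi> \<Longrightarrow> deriv L {Imp \<psi> \<chi> | \<chi>. \<chi> \<in> \<Gamma>} (Imp \<psi> \<phi>)"
| Imp2: "deriv L {Imp \<phi> \<psi>, Imp \<psi> \<chi>} (Imp \<phi> \<chi>)"
| Refl: "has_refl L \<Longrightarrow> deriv L {\<phi>, Imp \<phi> \<psi>} \<psi>"
| Tran: "has_tran L \<Longrightarrow> deriv L {Imp \<phi> \<psi>} (Imp Top (Imp \<phi> \<psi>))"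
| Sym1: "has_sym L \<Longrightarrow> deriv L (\<Gamma> \<union> {\<psi>}) \<chi> \<Longrightarrow>
           deriv L (\<Gamma> \<union> {Imp (Imp \<phi> \<psi>) Bot}) \<chi> \<Longrightarrow> deriv L (\<Gamma> \<union> {\<phi>}) \<chi>"
| Sym2: "has_sym L \<Longrightarrow>
           deriv L {Imp (Conj \<alpha> \<psi>) \<chi>, Imp (Conj \<alpha> (Imp (Imp \<phi> \<psi>) Bot)) \<chi>}
                   (Imp (Conj \<alpha> \<phi>) \<chi>)"
| PropMinus: "has_prop_minus L \<Longrightarrow> deriv L {Var p} (Imp (Imp Top Bot) (Var p))"
| PropTr: "has_prop_tr L \<Longrightarrow> deriv L {Var p} (Imp Top (Var p))"
| PropSy: "has_prop_sy L \<Longrightarrow> deriv L {Var p} (Imp (Imp (Imp (Var p) Bot) Bot) (Var p))"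

definition is_model :: "'w set \<Rightarrow> ('w \<times> 'w) set \<Rightarrow> (nat \<Rightarrow> 'w set) \<Rightarrow> bool" where
  "is_model W R V \<longleftrightarrow> W \<noteq> {} \<and> R \<subseteq> W \<times> W \<and> (\<forall>p. V p \<subseteq> W)"

fun sat :: "'w set \<Rightarrow> ('w \<times> 'w) set \<Rightarrow> (nat \<Rightarrow> 'w set) \<Rightarrow> 'w \<Rightarrow> form \<Rightarrow> bool" where
  "sat W R V s (Var p) = (s \<in> V p)"
| "sat W R V s Bot = False"
| "sat W R V s (Conj \<phi> \<psi>) = (sat W R V s \<phi> \<and> sat W R V s \<psi>)"
| "sat W R V s (Imp \<phi> \<psi>) = (\<forall>t. (s, t) \<in> R \<longrightarrow> sat W R V t \<phi> \<longrightarrow> sat W R V t \<psi>)"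

definition Rimg :: "('w \<times> 'w) set \<Rightarrow> 'w set \<Rightarrow> 'w set" where
  "Rimg R X = {t. \<exists>s\<in>X. (s, t) \<in> R}"

definition Rbox :: "'w set \<Rightarrow> ('w \<times> 'w) set \<Rightarrow> 'w set \<Rightarrow> 'w set" where
  "Rbox W R X = {s \<in> W. \<forall>t. (s, t) \<in> R \<longrightarrow> t \<in> X}"

definition is_proposition :: "'w set \<Rightarrow> ('w \<times> 'w) set \<Rightarrow> 'w set \<Rightarrow> bool" where
  "is_proposition W R X \<longleftrightarrow> X \<subseteq> W \<and> Rimg R X \<inter> Rbox W R (Rimg R X) \<subseteq> X"

definition is_interpretation :: "'w set \<Rightarrow> ('w \<times> 'w) set \<Rightarrow> (nat \<Rightarrow> 'w set) \<Rightarrow> bool" where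
  "is_interpretation W R V \<longleftrightarrow> is_model W R V \<and> (\<forall>p. is_proposition W R (V p))"

definition D_Pminus :: "'w set \<Rightarrow> ('w \<times> 'w) set \<Rightarrow> (nat \<Rightarrow> 'w set) \<Rightarrow> bool" where
  "D_Pminus W R V \<longleftrightarrow> is_model W R V \<and>
     (\<forall>p. V p \<subseteq> Rbox W R ((W - Rbox W R {}) \<union> V p))"
definition D_re :: "'w set \<Rightarrow> ('w \<times> 'w) set \<Rightarrow> (nat \<Rightarrow> 'w set) \<Rightarrow> bool" where
  "D_re W R V \<longleftrightarrow> is_model W R V \<and> refl_on W R"
definition D_Bp :: "'w set \<Rightarrow> ('w \<times> 'w) set \<Rightarrow> (nat \<Rightarrow> 'w set) \<Rightarrow> bool" where
  "D_Bp W R V \<longleftrightarrow> is_interpretation W R V \<and> sym R"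
definition D_V :: "'w set \<Rightarrow> ('w \<times> 'w) set \<Rightarrow> (nat \<Rightarrow> 'w set) \<Rightarrow> bool" where
  "D_V W R V \<longleftrightarrow> is_interpretation W R V \<and> trans R"
definition D_KB4p :: "'w set \<Rightarrow> ('w \<times> 'w) set \<Rightarrow> (nat \<Rightarrow> 'w set) \<Rightarrow> bool" where
  "D_KB4p W R V \<longleftrightarrow> is_interpretation W R V \<and> sym R \<and> trans R"
definition D_I :: "'w set \<Rightarrow> ('w \<times> 'w) set \<Rightarrow> (nat \<Rightarrow> 'w set) \<Rightarrow> bool" where
  "D_I W R V \<longleftrightarrow> is_interpretation W R V \<and> refl_on W R \<and> trans R"
definition D_O :: "'w set \<Rightarrow> ('w \<times> 'w) set \<Rightarrow> (nat \<Rightarrow> 'w set) \<Rightarrow> bool" where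
  "D_O W R V \<longleftrightarrow> is_interpretation W R V \<and> refl_on W R \<and> sym R"
definition D_C :: "'w set \<Rightarrow> ('w \<times> 'w) set \<Rightarrow> (nat \<Rightarrow> 'w set) \<Rightarrow> bool" where
  "D_C W R V \<longleftrightarrow> is_interpretation W R V \<and> refl_on W R \<and> sym R \<and> trans R"

(* \<Gamma> \<Turnstile>_C \<phi> where C = {(M,s) : M \<in> D, s \<in> M} *)
definition conseq :: "('w set \<Rightarrow> ('w \<times> 'w) set \<Rightarrow> (nat \<Rightarrow> 'w set) \<Rightarrow> bool)
                      \<Rightarrow> form set \<Rightarrow> form \<Rightarrow> bool" where
  "conseq D \<Gamma> \<phi> \<longleftrightarrow> (\<forall>W R V s. D W R V \<longrightarrow> s \<in> W \<longrightarrow>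
      (\<forall>\<gamma>\<in>\<Gamma>. sat W R V s \<gamma>) \<longrightarrow> sat W R V s \<phi>)"

end

theory Submission
  imports Defs
begin

definition good :: "logic \<Rightarrow> 'w set \<Rightarrow> ('w \<times> 'w) set \<Rightarrow> (nat \<Rightarrow> 'w set) \<Rightarrow> bool" where
  "good L W R V \<longleftrightarrow> is_model W R V \<and> (has_refl L \<longrightarrow> refl_on W R) \<and> (has_tran L \<longrightarrow> trans R)
     \<and> (has_sym L \<longrightarrow> sym R)
     \<and> (has_prop_minus L \<longrightarrow> (\<forall>p. V p \<subseteq> Rbox W R ((W - Rbox W R {}) \<union> V p)))
     \<and> (has_prop_tr L \<or> has_prop_sy L \<longrightarrow> (\<forall>p. is_proposition W R (V p)))"

lemma sat_Top[simp]: "sat W R V s Top" by (simp add: Top_def)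

lemma sound:
  assumes "deriv L \<Gamma> \<phi>" "good L W R V"
  shows "s \<in> W \<Longrightarrow> \<forall>\<gamma>\<in>\<Gamma>. sat W R V s \<gamma> \<Longrightarrow> sat W R V s \<phi>"
  using assms
proof (induction arbitrary: s rule: deriv.induct)
  case (Imp1 \<Gamma> \<phi> \<psi>)
  have RW: "(s,t) \<in> R \<Longrightarrow> t \<in> W" for t using Imp1.prems unfolding good_def is_model_def by blast
  show ?case
  proof (simp, intro allI impI)
    fix t assume t: "(s,t) \<in> R" "sat W R V t \<psi>"
    have "\<forall>\<gamma>\<in>\<Gamma>. sat W R V t \<gamma>"
    proof
      fix g assume "g \<in> \<Gamma>"
      then have "sat W R V s (Imp \<psi> g)" using Imp1.prems(2) by blast
      then show "sat W R V t g" using t by simp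
    qed
    then show "sat W R V t \<phi>" using Imp1.IH[of t] RW t Imp1.prems(3) by blast
  qed
next
  case (Refl \<phi> \<psi>)
  then have "(s,s) \<in> R" unfolding good_def refl_on_def by blast
  then show ?case using Refl by auto
next
  case (Tran \<phi> \<psi>)
  then have "trans R" unfolding good_def by blast
  then show ?case using Tran by (auto simp: trans_def)
next
  case (Sym1 \<Gamma> \<psi> \<chi> \<phi>)
  have sy: "sym R" using Sym1 unfolding good_def by blast
  show ?case
  proof (cases "sat W R V s \<psi>")
    case True then show ?thesis using Sym1 by auto
  next
    case False
    have "sat W R V s (Imp (Imp \<phi> \<psi>) Bot)"
      using False Sym1.prems sy by (auto simp: sym_def)
    then show ?thesis using Sym1 by auto
  qed
next
  case (Sym2 \<alpha> \<psi> \<chi> \<phi>)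
  have sy: "sym R" using Sym2 unfolding good_def by blast
  show ?case
  proof (simp, intro allI impI)
    fix t assume t: "(s,t) \<in> R" "sat W R V t \<alpha> \<and> sat W R V t \<phi>"
    show "sat W R V t \<chi>"
    proof (cases "sat W R V t \<psi>")
      case True then show ?thesis using Sym2 t by auto
    next
      case False
      have "sat W R V t (Imp (Imp \<phi> \<psi>) Bot)"
        using False t sy by (auto simp: sym_def)
      then show ?thesis using Sym2 t by auto
    qed
  qed
next
  case (PropMinus p)
  then have "V p \<subseteq> Rbox W R ((W - Rbox W R {}) \<union> V p)" and RW: "R \<subseteq> W \<times> W"
    unfolding good_def is_model_def by auto
  then show ?case using PropMinus by (auto simp: Rbox_def)
next
  case (PropTr p)
  then have pr: "is_proposition W R (V p)" and tr: "trans R" and RW: "R \<subseteq> W \<times> W"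
    unfolding good_def is_model_def by auto
  show ?case
  proof (simp, intro allI impI)
    fix t assume t: "(s,t) \<in> R"
    have s: "s \<in> V p" using PropTr by simp
    have "t \<in> Rimg R (V p)" using s t by (auto simp: Rimg_def)
    moreover have "t \<in> Rbox W R (Rimg R (V p))"
      using s t tr RW by (auto simp: Rimg_def Rbox_def trans_def)
    ultimately show "t \<in> V p" using pr unfolding is_proposition_def by blast
  qed
next
  case (PropSy p)
  then have pr: "is_proposition W R (V p)" and sy: "sym R" and RW: "R \<subseteq> W \<times> W"
    unfolding good_def is_model_def by auto
  show ?case
  proof (simp, intro allI impI)
    fix t assume t: "(s,t) \<in> R" and h: "\<forall>u. (t, u) \<in> R \<longrightarrow> (\<exists>v. (u, v) \<in> R \<and> v \<in> V p)"
    have s: "s \<in> V p" using PropSy by simp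
    have "t \<in> Rimg R (V p)" using s t by (auto simp: Rimg_def)
    moreover have "t \<in> Rbox W R (Rimg R (V p))"
      using h t sy RW unfolding Rimg_def Rbox_def sym_def by blast
    ultimately show "t \<in> V p" using pr unfolding is_proposition_def by blast
  qed
next
  case (A \<Gamma> \<phi>) then show ?case by simp
next
  case (Mon \<Gamma> \<Delta> \<phi>)
  have "\<forall>\<gamma>\<in>\<Gamma>. sat W R V s \<gamma>" using Mon.prems(2) Mon.hyps(1) by (meson subsetD)
  then show ?case using Mon.IH Mon.prems by simp
next
  case (Cut \<Gamma> \<psi> \<phi> \<Delta>)
  have "sat W R V s \<psi>" using Cut.IH(2) Cut.prems by simp
  then show ?case using Cut.IH(1) Cut.prems by simp
next
  case (BotE \<phi>) then show ?case by simp
next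
  case (ConjI \<phi> \<psi>) then show ?case by simp
next
  case (ConjE1 \<phi> \<psi>) then show ?case by simp
next
  case (ConjE2 \<phi> \<psi>) then show ?case by simp
next
  case (Imp0 \<phi>) then show ?case by simp
next
  case (Imp2 \<phi> \<psi> \<chi>)
  have h1: "sat W R V s (Imp \<phi> \<psi>)" and h2: "sat W R V s (Imp \<psi> \<chi>)"
    using Imp2.prems(2) by blast+
  show ?case
  proof (simp only: sat.simps, intro allI impI)
    fix t assume "(s,t) \<in> R" "sat W R V t \<phi>"
    then show "sat W R V t \<chi>" using h1 h2 by simp
  qed
qed

lemma conseqI: "(\<And>W R V. D W R V \<Longrightarrow> good L W R V) \<Longrightarrow> deriv L \<Gamma> \<phi> \<Longrightarrow> conseq D \<Gamma> \<phi>"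
  unfolding conseq_def
proof (intro allI impI)
  fix W R V s
  assume g: "\<And>W R V. D W R V \<Longrightarrow> good L W R V" and d: "deriv L \<Gamma> \<phi>"
    and "D W R V" "s \<in> W" "\<forall>\<gamma>\<in>\<Gamma>. sat W R V s \<gamma>"
  then show "sat W R V s \<phi>" using sound[OF d g[of W R V]] by blast
qed

lemmas logic_simps = has_refl.simps has_tran.simps has_sym.simps has_prop_minus.simps
  has_prop_tr.simps has_prop_sy.simps

lemma good_Kp: "D_Pminus W R V \<Longrightarrow> good Kp W R V"
  unfolding good_def D_Pminus_def is_model_def
  apply (simp only: logic_simps)
  apply simp
  done

lemma good_Tp: "D_re W R V \<Longrightarrow> good Tp W R V"
proof -
  assume d: "D_re W R V"
  then have m: "is_model W R V" and r: "refl_on W R" unfolding D_re_def by auto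
  have "Rbox W R {} = {}" using r unfolding Rbox_def refl_on_def by blast
  then have "\<forall>p. V p \<subseteq> Rbox W R ((W - Rbox W R {}) \<union> V p)"
    using m r unfolding is_model_def Rbox_def by blast
  then show ?thesis using m r unfolding good_def by (simp only: logic_simps) simp
qed

lemma good_Bp: "D_Bp W R V \<Longrightarrow> good Bp W R V"
  unfolding good_def D_Bp_def is_interpretation_def
  apply (simp only: logic_simps)
  apply simp
  done

lemma good_Vl: "D_V W R V \<Longrightarrow> good Vl W R V"
  unfolding good_def D_V_def is_interpretation_def
  apply (simp only: logic_simps)
  apply simp
  done

lemma good_KB4p: "D_KB4p W R V \<Longrightarrow> good KB4p W R V"
  unfolding good_def D_KB4p_def is_interpretation_def
  apply (simp only: logic_simps)
  apply simp
  done

lemma good_Il: "D_I W R V \<Longrightarrow> good Il W R V"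
  unfolding good_def D_I_def is_interpretation_def
  apply (simp only: logic_simps)
  apply simp
  done

lemma good_Ol: "D_O W R V \<Longrightarrow> good Ol W R V"
  unfolding good_def D_O_def is_interpretation_def
  apply (simp only: logic_simps)
  apply simp
  done

lemma good_Cl: "D_C W R V \<Longrightarrow> good Cl W R V"
  unfolding good_def D_C_def is_interpretation_def
  apply (simp only: logic_simps)
  apply simp
  done

theorem mainTheorem5:
  fixes \<Gamma> :: "form set" and \<phi> :: form
  shows "(deriv Kp \<Gamma> \<phi> \<longrightarrow> conseq (D_Pminus :: 'w set \<Rightarrow> _) \<Gamma> \<phi>)
       \<and> (deriv Tp \<Gamma> \<phi> \<longrightarrow> conseq (D_re :: 'w set \<Rightarrow> _) \<Gamma> \<phi>)
       \<and> (deriv Bp \<Gamma> \<phi> \<longrightarrow> conseq (D_Bp :: 'w set \<Rightarrow> _) \<Gamma> \<phi>)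
       \<and> (deriv Vl \<Gamma> \<phi> \<longrightarrow> conseq (D_V :: 'w set \<Rightarrow> _) \<Gamma> \<phi>)
       \<and> (deriv KB4p \<Gamma> \<phi> \<longrightarrow> conseq (D_KB4p :: 'w set \<Rightarrow> _) \<Gamma> \<phi>)
       \<and> (deriv Il \<Gamma> \<phi> \<longrightarrow> conseq (D_I :: 'w set \<Rightarrow> _) \<Gamma> \<phi>)
       \<and> (deriv Ol \<Gamma> \<phi> \<longrightarrow> conseq (D_O :: 'w set \<Rightarrow> _) \<Gamma> \<phi>)
       \<and> (deriv Cl \<Gamma> \<phi> \<longrightarrow> conseq (D_C :: 'w set \<Rightarrow> _) \<Gamma> \<phi>)"
proof (intro conjI impI)
  show "conseq (D_Pminus :: 'w set \<Rightarrow> _) \<Gamma> \<phi>" if "deriv Kp \<Gamma> \<phi>"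
    using conseqI[OF good_Kp that] .
  show "conseq (D_re :: 'w set \<Rightarrow> _) \<Gamma> \<phi>" if "deriv Tp \<Gamma> \<phi>"
    using conseqI[OF good_Tp that] .
  show "conseq (D_Bp :: 'w set \<Rightarrow> _) \<Gamma> \<phi>" if "deriv Bp \<Gamma> \<phi>"
    using conseqI[OF good_Bp that] .
  show "conseq (D_V :: 'w set \<Rightarrow> _) \<Gamma> \<phi>" if "deriv Vl \<Gamma> \<phi>"
    using conseqI[OF good_Vl that] .
  show "conseq (D_KB4p :: 'w set \<Rightarrow> _) \<Gamma> \<phi>" if "deriv KB4p \<Gamma> \<phi>"
    using conseqI[OF good_KB4p that] .
  show "conseq (D_I :: 'w set \<Rightarrow> _) \<Gamma> \<phi>" if "deriv Il \<Gamma> \<phi>"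
    using conseqI[OF good_Il that] .
  show "conseq (D_O :: 'w set \<Rightarrow> _) \<Gamma> \<phi>" if "deriv Ol \<Gamma> \<phi>"
    using conseqI[OF good_Ol that] .
  show "conseq (D_C :: 'w set \<Rightarrow> _) \<Gamma> \<phi>" if "deriv Cl \<Gamma> \<phi>"
    using conseqI[OF good_Cl that] .
qed

end
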